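(* Let $f:\mathbb{R}^p\times\mathbb{R}^n\to\mathbb{R}^n$, written $f(a,x)$ with parameters $a\in\mathbb{R}^p$ and variables $x\in\mathbb{R}^n$, be such that for every $a$ the map $f(a,\cdot)$ is differentiable (on an open set containing the box $[x]$ below), with Jacobian $\frac{\partial f}{\partial x}(a,x)$ with respect to $x$. Let $[x],[y],[z]\in\mathbb{IR}^n$, $[a]\in\mathbb{IR}^p$, $\tilde x\in[x]$ and $[X]\in\mathbb{IR}^{n\times n}$ satisfy: (i) $[x]\subseteq[z]$; (ii) $\{f(a,\tilde x): a\in[a]\}\subseteq[y]$; (iii) $\{\frac{\partial f}{\partial x}(a,x): a\in[a],\ x\in[x]\}\subseteq[X]$ (entrywise inclusion). Define the (parametric) Hansen–Sengupta image $$[x'] := \tilde x+\Gamma\bigl([X],\,-[y],\,[x]-\tilde x,\,[z]-\tilde x\bigr).$$ Then: (1) for every $a\in[a]$ and every $x\in[x]$ with $f(a,x)=0$, one has $x\in[x']$; (2) if $[x']\neq\emptyset$ and $[x']\subseteq\operatorname{int}[x]$, then for every $a\in[a]$ the map $f(a,\cdot)$ has a unique zero in $[x']$.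
   Context: $\mathbb{IR}^n$ denotes the set of closed interval vectors (boxes) of dimension $n$ and $\mathbb{IR}^{n\times n}$ the set of $n\times n$ interval matrices; sums and products of intervals are those of (extended) interval arithmetic, and subtracting a real vector from an interval vector is done componentwise. For a set $S\subseteq\mathbb{R}$, $\Box S$ denotes its interval hull (smallest closed interval containing $S$, possibly unbounded; $\Box\emptyset=\emptyset$). One-dimensional Gauss–Seidel: for intervals $[\alpha],[\beta],[\xi]$, $$\gamma([\alpha],[\beta],[\xi]):=\Box\{x\in[\xi]:\ \exists \alpha\in[\alpha],\ \exists\beta\in[\beta],\ \alpha x=\beta\}$$ (when $0\notin[\alpha]$ this equals $([\beta]/[\alpha])\cap[\xi]$). Multidimensional interval Gauss–Seidel: for $[A]\in\mathbb{IR}^{n\times n}$ with entries $[A_{ij}]$, and $[b],[u],[w]\in\mathbb{IR}^n$, $\Gamma([A],[b],[u],[w]):=[u']$ where the components are computed successively for $i=1,\dots,n$ by $$[u'_i]:=\gamma\Bigl([A_{ii}],\ [b_i]-\sum_{j<i}[A_{ij}][u'_j]-\sum_{j>i}[A_{ij}][u_j],\ [w_i]\Bigr).$$ If some component is empty, $[u']$ is the empty set. *)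

theory Defs
  imports "HOL-Analysis.Analysis"
begin

text \<open>Intervals (elements of IR) are represented as sets of reals; all intervals occurring
below are closed and bounded (possibly empty), and on such sets the interval operations
coincide with the elementwise set operations defined here.\<close>

definition iadd :: "real set \<Rightarrow> real set \<Rightarrow> real set" where
  "iadd A B = {a + b | a b. a \<in> A \<and> b \<in> B}"

definition isub :: "real set \<Rightarrow> real set \<Rightarrow> real set" where
  "isub A B = {a - b | a b. a \<in> A \<and> b \<in> B}"

definition imul :: "real set \<Rightarrow> real set \<Rightarrow> real set" where
  "imul A B = {a * b | a b. a \<in> A \<and> b \<in> B}"

definition ilsum :: "real set list \<Rightarrow> real set" where
  "ilsum xs = foldr iadd xs {0}"

text \<open>Interval hull: smallest closed interval containing S (possibly unbounded; hull of {} is {}).\<close>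
definition ihull :: "real set \<Rightarrow> real set" where
  "ihull S = closure (convex hull S)"

definition gamma1 :: "real set \<Rightarrow> real set \<Rightarrow> real set \<Rightarrow> real set" where
  "gamma1 Al Be Xi = ihull {x \<in> Xi. \<exists>\<alpha>\<in>Al. \<exists>\<beta>\<in>Be. \<alpha> * x = \<beta>}"

text \<open>One Gauss-Seidel update of component i: U holds new components for already processed
indices and old ones for the others.\<close>
definition gs_step ::
  "('n::{finite,linorder} \<Rightarrow> 'n \<Rightarrow> real set) \<Rightarrow> ('n \<Rightarrow> real set) \<Rightarrow> ('n \<Rightarrow> real set)
    \<Rightarrow> ('n \<Rightarrow> real set) \<Rightarrow> 'n \<Rightarrow> ('n \<Rightarrow> real set)" where
  "gs_step A b w U i = U(i := gamma1 (A i i)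
      (isub (b i) (ilsum (map (\<lambda>j. imul (A i j) (U j)) (sorted_list_of_set (UNIV - {i})))))
      (w i))"

text \<open>Multidimensional interval Gauss-Seidel Gamma([A],[b],[u],[w]), components processed in
increasing index order; the result is the box (set of vectors) of the new components,
which is empty as soon as one component is empty.\<close>
definition GS ::
  "('n::{finite,linorder} \<Rightarrow> 'n \<Rightarrow> real set) \<Rightarrow> ('n \<Rightarrow> real set) \<Rightarrow> ('n \<Rightarrow> real set)
    \<Rightarrow> ('n \<Rightarrow> real set) \<Rightarrow> (real^'n::{finite,linorder}) set" where
  "GS A b u w =
     (let U = foldl (gs_step A b w) u (sorted_list_of_set UNIV)
      in {v. \<forall>i. v $ i \<in> U i})"

end

theory Submission
  imports Defs
begin


lemma foldl_gs_other:
  "k \<notin> set L \<Longrightarrow> foldl (gs_step A b w) V L k = V k"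
  by (induction L arbitrary: V) (auto simp: gs_step_def)

lemma foldl_prefix_inv_aux:
  assumes "P Vz"
    and step: "\<And>L1 i L2. L = L1 @ i # L2 \<Longrightarrow> P (foldl st Vz L1) \<Longrightarrow> P (st (foldl st Vz L1) i)"
  shows "L = Ma @ Mb \<Longrightarrow> P (foldl st Vz Ma)"
proof (induction Ma arbitrary: Mb rule: rev_induct)
  case Nil then show ?case using assms(1) by simp
next
  case (snoc i L1)
  then have "P (foldl st Vz L1)" by auto
  then show ?case using step[of L1 i Mb] snoc.prems by simp
qed

lemma foldl_prefix_inv:
  assumes "P Vz"
    and "\<And>L1 i L2. L = L1 @ i # L2 \<Longrightarrow> P (foldl st Vz L1) \<Longrightarrow> P (st (foldl st Vz L1) i)"
  shows "P (foldl st Vz L)"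
  using foldl_prefix_inv_aux[where P=P and Vz=Vz and st=st and L=L and Ma=L and Mb="[]"] assms by simp

lemma foldl_gs_final:
  assumes "distinct L" "L = L1 @ i # L2"
  shows "foldl (gs_step A b w) Vz L i = gs_step A b w (foldl (gs_step A b w) Vz L1) i i"
  using assms foldl_gs_other[of i L2 A b w] by simp

lemma ilsum_mem:
  assumes "\<forall>j\<in>set L. c j \<in> S j"
  shows "sum_list (map c L) \<in> ilsum (map S L)"
  using assms
proof (induction L)
  case Nil then show ?case by (simp add: ilsum_def)
next
  case (Cons a L)
  then show ?case by (auto simp: ilsum_def iadd_def)
qed

lemma ilsum_mem_set:
  assumes "finite A" "\<forall>j\<in>A. c j \<in> S j"
  shows "(\<Sum>j\<in>A. c j) \<in> ilsum (map S (sorted_list_of_set A))"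
proof -
  have "(\<Sum>j\<in>A. c j) = sum_list (map c (sorted_list_of_set A))"
    using assms(1) by (simp add: sum_list_distinct_conv_sum_set)
  then show ?thesis using ilsum_mem[of "sorted_list_of_set A" c S] assms by simp
qed

lemma connected_iadd:
  assumes "connected A" "connected B" shows "connected (iadd A B)"
proof -
  have "iadd A B = (\<lambda>p. fst p + snd p) ` (A \<times> B)" apply (auto simp: iadd_def) apply (metis (mono_tags) SigmaI fst_conv image_eqI snd_conv) by blast
  moreover have "connected ((\<lambda>p. fst p + snd p) ` (A \<times> B))"
    by (intro connected_continuous_image connected_Times assms continuous_intros)
  ultimately show ?thesis by simp
qed

lemma connected_isub:
  assumes "connected A" "connected B" shows "connected (isub A B)"
proof -
  have "isub A B = (\<lambda>p. fst p - snd p) ` (A \<times> B)" apply (auto simp: isub_def) apply (metis (mono_tags) SigmaI fst_conv image_eqI snd_conv) by blast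
  moreover have "connected ((\<lambda>p. fst p - snd p) ` (A \<times> B))"
    by (intro connected_continuous_image connected_Times assms continuous_intros)
  ultimately show ?thesis by simp
qed

lemma connected_imul:
  assumes "connected A" "connected B" shows "connected (imul A B)"
proof -
  have "imul A B = (\<lambda>p. fst p * snd p) ` (A \<times> B)" apply (auto simp: imul_def) apply (metis (mono_tags) SigmaI fst_conv image_eqI snd_conv) by blast
  moreover have "connected ((\<lambda>p. fst p * snd p) ` (A \<times> B))"
    by (intro connected_continuous_image connected_Times assms continuous_intros)
  ultimately show ?thesis by simp
qed

lemma connected_ilsum:
  assumes "\<forall>S\<in>set L. connected S" shows "connected (ilsum L)"
  using assms by (induction L) (auto simp: ilsum_def intro: connected_iadd)

lemma connected_gamma1: "connected (gamma1 A B W)"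
  unfolding gamma1_def ihull_def
  by (intro convex_connected convex_closure convex_convex_hull)

lemma ihull_empty_iff: "ihull S = {} \<longleftrightarrow> S = {}"
  by (auto simp: ihull_def)

lemma ihull_sub: "S \<subseteq> ihull S"
  unfolding ihull_def by (rule subset_trans[OF hull_subset closure_subset])

lemma between_cd:
  fixes q c d x :: real
  assumes "0 < q" "q < 1" "c \<le> 0" "0 \<le> d" "x \<in> {c..d}"
  shows "x * q \<in> {c..d}"
proof (cases "x \<ge> 0")
  case True
  then have "0 \<le> x*q" "x * q \<le> x" using assms by (auto intro: mult_left_le)
  then show ?thesis using assms by auto
next
  case False
  then have "x*q \<le> 0" "x \<le> x * q" using assms
    by (auto simp: mult_nonpos_nonneg mult_left_le_one_le[of "-x" q] )
  then show ?thesis using assms by auto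
qed

lemma key1d_sign:
  fixes c d l h :: real
  assumes "c \<le> d" "{l..h} \<subseteq> W"
    and S: "S = {u \<in> W. \<exists>\<alpha>\<in>{c..d}. \<exists>\<beta>\<in>B. \<alpha>*u = \<beta>}"
    and ne: "ihull S \<noteq> {}" and sub: "ihull S \<subseteq> {l<..<h}"
  shows "0 < c \<or> d < 0"
proof (rule ccontr)
  assume z: "\<not> (0 < c \<or> d < 0)"
  have Ssub: "S \<subseteq> {l<..<h}" using sub ihull_sub by blast
  from ne obtain u0 where u0: "u0 \<in> S" using ihull_empty_iff by blast
  then obtain \<alpha>0 \<beta>0 where a0: "\<alpha>0\<in>{c..d}" "\<beta>0\<in>B" "\<alpha>0*u0 = \<beta>0" using S by auto
  have lu: "l < u0" "u0 < h" using u0 Ssub by auto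
  have lW: "l \<in> W" "h \<in> W" using assms(2) lu by auto
  show False
  proof (cases "\<beta>0 = 0")
    case True
    then have "l \<in> S" using S lW z a0 by (auto intro!: bexI[of _ 0])
    then show False using Ssub by auto
  next
    case False
    then have "\<alpha>0 \<noteq> 0" "u0 \<noteq> 0" using a0 by auto
    show False
    proof (cases "u0 > 0")
      case True
      define \<alpha> where "\<alpha> = \<alpha>0 * (u0 / h)"
      have h0: "h > 0" using True lu by simp
      have q: "0 < u0/h" "u0/h < 1" using True lu h0 by (auto simp: field_simps)
      have "\<alpha> \<in> {c..d}" unfolding \<alpha>_def
        using between_cd[OF q, of c d \<alpha>0] z a0 by auto
      moreover have "\<alpha> * h = \<beta>0" using a0 h0 unfolding \<alpha>_def by (simp add: field_simps)
      ultimately have "h \<in> S" using S lW a0 by auto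
      then show False using Ssub by auto
    next
      case False
      then have u0n: "u0 < 0" using \<open>u0 \<noteq> 0\<close> by simp
      define \<alpha> where "\<alpha> = \<alpha>0 * (u0 / l)"
      have l0: "l < 0" using u0n lu by simp
      have q: "0 < u0/l" "u0/l < 1" using u0n lu l0 by (auto simp: field_simps)
      have "\<alpha> \<in> {c..d}" unfolding \<alpha>_def
        using between_cd[OF q, of c d \<alpha>0] z a0 by auto
      moreover have "\<alpha> * l = \<beta>0" using a0 l0 unfolding \<alpha>_def by (simp add: field_simps)
      ultimately have "l \<in> S" using S lW a0 by auto
      then show False using Ssub by auto
    qed
  qed
qed

lemma key1d_bound:
  fixes c d l h :: real
  assumes "{l..h} \<subseteq> W" and cd: "0 < c \<or> d < 0" and B: "connected B"
    and S: "S = {u \<in> W. \<exists>\<alpha>\<in>{c..d}. \<exists>\<beta>\<in>B. \<alpha>*u = \<beta>}"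
    and ne: "ihull S \<noteq> {}" and sub: "ihull S \<subseteq> {l<..<h}"
    and \<alpha>: "\<alpha> \<in> {c..d}" and \<beta>: "\<beta> \<in> B"
  shows "l < \<beta>/\<alpha> \<and> \<beta>/\<alpha> < h"
proof -
  have Ssub: "S \<subseteq> {l<..<h}" using sub ihull_sub by blast
  from ne obtain r where r: "r \<in> S" using ihull_empty_iff by blast
  define I where "I = (\<lambda>p. fst p / snd p) ` (B \<times> {c..d})"
  have nz: "\<And>a. a \<in> {c..d} \<Longrightarrow> a \<noteq> 0" using cd by auto
  have "connected I" unfolding I_def
    by (intro connected_continuous_image connected_Times B connected_Icc continuous_intros)
       (auto dest: nz)
  then have ci: "\<And>x y z. x \<in> I \<Longrightarrow> y \<in> I \<Longrightarrow> x \<le> z \<Longrightarrow> z \<le> y \<Longrightarrow> z \<in> I"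
    unfolding connected_iff_interval by blast
  have memS: "z \<in> S" if "z \<in> I" "z \<in> W" for z
  proof -
    from that obtain b a where "b \<in> B" "a \<in> {c..d}" "z = b / a" unfolding I_def by auto
    then have "a * z = b" using nz[of a] by simp
    then show ?thesis using S that \<open>b \<in> B\<close> \<open>a \<in> {c..d}\<close> by blast
  qed
  have rI: "r \<in> I"
  proof -
    from r S obtain a b where "a \<in> {c..d}" "b \<in> B" "a * r = b" by auto
    then have "r = b / a" using nz[of a] by (auto simp: field_simps)
    then show ?thesis unfolding I_def using \<open>a \<in> {c..d}\<close> \<open>b \<in> B\<close> by force
  qed
  have pI: "\<beta>/\<alpha> \<in> I" unfolding I_def using \<alpha> \<beta> by force
  have rb: "l < r" "r < h" using r Ssub by auto
  show ?thesis
  proof (rule ccontr)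
    assume "\<not> ?thesis"
    then consider "\<beta>/\<alpha> \<le> l" | "h \<le> \<beta>/\<alpha>" by linarith
    then show False
    proof cases
      case 1
      then have "l \<in> I" using ci[OF pI rI] rb by auto
      moreover have "l \<in> W" using assms(1) rb by auto
      ultimately have "l \<in> S" using memS by blast
      then show False using Ssub by auto
    next
      case 2
      then have "h \<in> I" using ci[OF rI pI] rb by auto
      moreover have "h \<in> W" using assms(1) rb by auto
      ultimately have "h \<in> S" using memS by blast
      then show False using Ssub by auto
    qed
  qed
qed



lemma mvt_row:
  fixes g :: "real^'n \<Rightarrow> real^'m" and Jg :: "real^'n \<Rightarrow> real^'n^'m"
  assumes der: "\<And>x. x \<in> D \<Longrightarrow> (g has_derivative (\<lambda>h. Jg x *v h)) (at x)"
    and sub: "cbox lo hi \<subseteq> D" and p: "p \<in> cbox lo hi" and q: "q \<in> cbox lo hi"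
  shows "\<exists>\<xi>\<in>cbox lo hi. g q $ i - g p $ i = (\<Sum>j\<in>UNIV. Jg \<xi> $ i $ j * (q - p) $ j)"
proof -
  define c where "c t = p + t *\<^sub>R (q - p)" for t :: real
  have cin: "c t \<in> cbox lo hi" if "0 \<le> t" "t \<le> 1" for t
  proof -
    have "c t = (1 - t) *\<^sub>R p + t *\<^sub>R q" unfolding c_def by (simp add: algebra_simps)
    then show ?thesis using convex_box(1)[of lo hi] p q that unfolding convex_alt by auto
  qed
  have dc: "(c has_derivative (\<lambda>s. s *\<^sub>R (q - p))) (at t within {0..1})" for t
    unfolding c_def by (auto intro!: derivative_eq_intros)
  have "((\<lambda>t. g (c t) $ i) has_derivative (\<lambda>s. (Jg (c t) *v (s *\<^sub>R (q - p))) $ i)) (at t within {0..1})"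
    if "0 \<le> t" "t \<le> 1" for t
  proof -
    have "(g has_derivative (\<lambda>h. Jg (c t) *v h)) (at (c t) within c ` {0..1})"
      using der[of "c t"] cin[OF that] sub by (auto intro: has_derivative_subset)
    then have "((g \<circ> c) has_derivative ((\<lambda>h. Jg (c t) *v h) \<circ> (\<lambda>s. s *\<^sub>R (q - p)))) (at t within {0..1})"
      using diff_chain_within[OF dc] by blast
    then have "((\<lambda>t. g (c t)) has_derivative (\<lambda>s. Jg (c t) *v (s *\<^sub>R (q - p)))) (at t within {0..1})"
      by (simp add: o_def)
    from bounded_linear.has_derivative[OF bounded_linear_vec_nth[of i] this]
    show ?thesis .
  qed
  from mvt_very_simple[of 0 1 "\<lambda>t. g (c t) $ i", OF _ this]
  obtain t where t: "t \<in> {0..1}" "g (c 1) $ i - g (c 0) $ i = (Jg (c t) *v ((1 - 0) *\<^sub>R (q - p))) $ i"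
    by auto
  moreover have "c 1 = q" "c 0 = p" unfolding c_def by auto
  ultimately show ?thesis using cin[of t]
    by (auto simp: matrix_vector_mult_def intro!: bexI[of _ "c t"])
qed



lemma fp_arith:
  fixes lo hi x s gi a \<beta> x0 :: real
  assumes "lo \<le> x" "x \<le> hi" "x = max lo (min hi (x - s*gi))"
    "gi = a*(x - x0) - \<beta>" "s*a > 0" "lo - x0 < \<beta>/a" "\<beta>/a < hi - x0"
  shows "x - x0 = \<beta>/a"
proof -
  have a0: "a \<noteq> 0" using assms(5) by auto
  define d where "d = (x - x0) - \<beta>/a"
  have sg: "s*gi = (s*a)*d" unfolding d_def assms(4) using a0 by (simp add: field_simps)
  consider "d < 0" | "d = 0" | "d > 0" by linarith
  then show ?thesis
  proof cases
    case 1
    then have "s*gi < 0" unfolding sg using assms(5) by (simp add: mult_pos_neg)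
    moreover have "x < hi" using 1 assms(7) unfolding d_def by linarith
    ultimately show ?thesis using assms(3) by (smt (verit))
  next
    case 2 then show ?thesis unfolding d_def by simp
  next
    case 3
    then have "s*gi > 0" unfolding sg using assms(5) by simp
    moreover have "x > lo" using 3 assms(6) unfolding d_def by linarith
    ultimately show ?thesis using assms(3) by (smt (verit))
  qed
qed

lemma fp_interior:
  fixes lo hi x s gi :: real
  assumes "lo < x" "x < hi" "x = max lo (min hi (x - s*gi))" "s \<noteq> 0"
  shows "gi = 0"
proof -
  have "s * gi = 0" using assms(1-3) by (smt (verit))
  then show ?thesis using assms(4) by simp
qed

lemma connected_uminus_Icc: "connected (uminus ` {a..b::real})"
  by (intro connected_continuous_image connected_Icc continuous_intros)

context
  fixes g :: "real^'n::{finite,linorder} \<Rightarrow> real^'n::{finite,linorder}"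
    and Jg :: "real^'n::{finite,linorder} \<Rightarrow> real^'n::{finite,linorder}^'n::{finite,linorder}"
    and D :: "(real^'n::{finite,linorder}) set"
    and xlo xhi ylo yhi zlo zhi xt :: "real^'n::{finite,linorder}"
    and Xlo Xhi :: "real^'n::{finite,linorder}^'n::{finite,linorder}"
  assumes D_box: "cbox xlo xhi \<subseteq> D"
    and deriv: "\<And>x. x \<in> D \<Longrightarrow> (g has_derivative (\<lambda>h. Jg x *v h)) (at x)"
    and xt_in: "xt \<in> cbox xlo xhi"
    and h1: "cbox xlo xhi \<subseteq> cbox zlo zhi"
    and h2: "g xt \<in> cbox ylo yhi"
    and h3: "\<forall>x \<in> cbox xlo xhi. \<forall>i j. Jg x $ i $ j \<in> {Xlo $ i $ j .. Xhi $ i $ j}"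
begin

abbreviation "XI \<equiv> (\<lambda>i j. {Xlo $ i $ j .. Xhi $ i $ j})"
abbreviation "BI \<equiv> (\<lambda>i. uminus ` {ylo $ i .. yhi $ i})"
abbreviation "KI \<equiv> (\<lambda>i. {xlo $ i - xt $ i .. xhi $ i - xt $ i})"
abbreviation "WI \<equiv> (\<lambda>i. {zlo $ i - xt $ i .. zhi $ i - xt $ i})"
abbreviation "Bs V i \<equiv> isub (BI i) (ilsum (map (\<lambda>j. imul (XI i j) (V j)) (sorted_list_of_set (UNIV - {i}))))"

lemma x_le: "xlo $ i \<le> xhi $ i"
  using xt_in unfolding mem_box_cart by (meson order_trans)

lemma z_le: "zlo $ i \<le> xlo $ i \<and> xhi $ i \<le> zhi $ i"
proof -
  have "xlo \<in> cbox xlo xhi" "xhi \<in> cbox xlo xhi" using x_le by (auto simp: mem_box_cart)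
  then have "xlo \<in> cbox zlo zhi" "xhi \<in> cbox zlo zhi" using h1 by auto
  then show ?thesis unfolding mem_box_cart by blast
qed

lemma KW: "{xlo $ i - xt $ i .. xhi $ i - xt $ i} \<subseteq> {zlo $ i - xt $ i .. zhi $ i - xt $ i}"
  using z_le[of i] by auto

lemma x_in_W: "x \<in> cbox xlo xhi \<Longrightarrow> (x - xt) $ i \<in> WI i"
proof -
  assume "x \<in> cbox xlo xhi"
  then have "x \<in> cbox zlo zhi" using h1 by auto
  then show ?thesis unfolding mem_box_cart by auto
qed

lemma row_beta:
  assumes "\<forall>j. u $ j \<in> V j" "\<forall>j. a j \<in> XI i j" "Fi \<in> {ylo $ i .. yhi $ i}"
  shows "(- Fi - (\<Sum>j\<in>UNIV - {i}. a j * u $ j)) \<in> Bs V i"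
proof -
  have "(\<Sum>j\<in>UNIV - {i}. a j * u $ j) \<in> ilsum (map (\<lambda>j. imul (XI i j) (V j)) (sorted_list_of_set (UNIV - {i})))"
    using ilsum_mem_set[of "UNIV - {i}" "\<lambda>j. a j * u $ j" "\<lambda>j. imul (XI i j) (V j)"] assms(1,2)
    by (auto simp: imul_def)
  moreover have "- Fi \<in> BI i" using assms(3) by auto
  ultimately show ?thesis unfolding isub_def by blast
qed

lemma row_eq:
  assumes "x \<in> cbox xlo xhi"
  obtains a where "\<forall>j. a j \<in> XI i j"
    "g x $ i = g xt $ i + a i * (x - xt) $ i + (\<Sum>j\<in>UNIV - {i}. a j * (x - xt) $ j)"
proof -
  obtain \<xi> where \<xi>: "\<xi> \<in> cbox xlo xhi" "g x $ i - g xt $ i = (\<Sum>j\<in>UNIV. Jg \<xi> $ i $ j * (x - xt) $ j)"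
    using mvt_row[OF deriv D_box xt_in assms, of i] by blast
  have "(\<Sum>j\<in>UNIV. Jg \<xi> $ i $ j * (x - xt) $ j) = Jg \<xi> $ i $ i * (x - xt) $ i + (\<Sum>j\<in>UNIV - {i}. Jg \<xi> $ i $ j * (x - xt) $ j)"
    by (simp add: sum.remove)
  then show ?thesis using that[of "\<lambda>j. Jg \<xi> $ i $ j"] \<xi> h3 by auto
qed

lemma zero_mem:
  assumes x: "x \<in> cbox xlo xhi" and gx: "g x = 0"
  shows "x \<in> (\<lambda>v. xt + v) ` GS XI BI KI WI"
proof -
  define u where "u = x - xt"
  have "\<forall>j. u $ j \<in> foldl (gs_step XI BI WI) KI (sorted_list_of_set UNIV) j"
  proof (rule foldl_prefix_inv[where P="\<lambda>V. \<forall>j. u $ j \<in> V j"])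
    show "\<forall>j. u $ j \<in> KI j" using x unfolding u_def by (auto simp: mem_box_cart)
  next
    fix L1 i L2 V
    assume IH: "\<forall>j. u $ j \<in> foldl (gs_step XI BI WI) KI L1 j"
    define V where "V = foldl (gs_step XI BI WI) KI L1"
    obtain a where a: "\<forall>j. a j \<in> XI i j"
      "g x $ i = g xt $ i + a i * (x - xt) $ i + (\<Sum>j\<in>UNIV - {i}. a j * (x - xt) $ j)"
      using row_eq[OF x] by blast
    define BB where "BB = Bs V i"
    define \<beta> where "\<beta> = - g xt $ i - (\<Sum>j\<in>UNIV - {i}. a j * u $ j)"
    have hb: "\<beta> \<in> BB"
      using row_beta[of u V a i "g xt $ i"] IH a h2 unfolding V_def BB_def \<beta>_def by (auto simp: mem_box_cart)
    have he: "a i * u $ i = \<beta>"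
      using a gx unfolding u_def \<beta>_def by auto
    have hw: "u $ i \<in> WI i" using x_in_W[OF x] unfolding u_def .
    have ai: "a i \<in> XI i i" using a(1) by blast
    have "\<exists>\<alpha>\<in>XI i i. \<exists>\<beta>'\<in>BB. \<alpha> * u $ i = \<beta>'"
      using ai hb he by (intro bexI[where x="a i"] bexI[where x="\<beta>"])
    then have "u $ i \<in> {w \<in> WI i. \<exists>\<alpha>\<in>XI i i. \<exists>\<beta>\<in>BB. \<alpha> * w = \<beta>}"
      using hw apply (intro CollectI conjI) apply assumption+ done
    then have "u $ i \<in> gamma1 (XI i i) BB (WI i)"
      unfolding gamma1_def by (rule subsetD[OF ihull_sub])
    then have "u $ i \<in> gamma1 (XI i i) (Bs V i) (WI i)" unfolding BB_def .
    then show "\<forall>j. u $ j \<in> gs_step XI BI WI (foldl (gs_step XI BI WI) KI L1) i j"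
      using IH unfolding gs_step_def V_def by auto
  qed
  then have "u \<in> GS XI BI KI WI" unfolding GS_def Let_def by simp
  then show ?thesis unfolding u_def by (auto intro!: image_eqI[of _ _ "x - xt"])
qed

lemma exists_zero:
  assumes ne: "(\<lambda>v. xt + v) ` GS XI BI KI WI \<noteq> {}"
    and sub: "(\<lambda>v. xt + v) ` GS XI BI KI WI \<subseteq> interior (cbox xlo xhi)"
  shows "\<exists>x\<in>cbox xlo xhi. g x = 0"
proof -
  define L where "L = sorted_list_of_set (UNIV :: 'n set)"
  have dL: "distinct L" and sL: "set L = UNIV" unfolding L_def by auto
  define Uf where "Uf = foldl (gs_step XI BI WI) KI L"
  have GSe: "GS XI BI KI WI = {v. \<forall>i. v $ i \<in> Uf i}" unfolding GS_def Let_def Uf_def L_def by simp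
  have Une: "Uf i \<noteq> {}" for i
  proof
    assume "Uf i = {}" then have "GS XI BI KI WI = {}" unfolding GSe by auto
    then show False using ne by simp
  qed
  have Ub: "xlo $ i - xt $ i < t \<and> t < xhi $ i - xt $ i" if t: "t \<in> Uf i" for i t
  proof -
    define v where "v = (\<chi> k. if k = i then t else (SOME s. s \<in> Uf k))"
    have "v $ k \<in> Uf k" for k
    proof (cases "k = i")
      case True then show ?thesis using t unfolding v_def by simp
    next
      case False then show ?thesis unfolding v_def using Une[of k] by (simp add: some_in_eq)
    qed
    then have "v \<in> GS XI BI KI WI" unfolding GSe by blast
    then have "xt + v \<in> box xlo xhi" using sub by auto
    then have "xlo $ i < (xt + v) $ i \<and> (xt + v) $ i < xhi $ i" unfolding mem_box_cart by blast
    then show ?thesis unfolding v_def by simp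
  qed
  have Ufi: "Uf i = gamma1 (XI i i) (Bs (foldl (gs_step XI BI WI) KI L1) i) (WI i)"
    if "L = L1 @ i # L2" for L1 i L2
    unfolding Uf_def using foldl_gs_final[OF dL that] by (simp add: gs_step_def)
  have keyS: "ihull {w \<in> WI i. \<exists>\<alpha>\<in>XI i i. \<exists>\<beta>\<in>BB. \<alpha> * w = \<beta>} \<noteq> {}
      \<and> ihull {w \<in> WI i. \<exists>\<alpha>\<in>XI i i. \<exists>\<beta>\<in>BB. \<alpha> * w = \<beta>} \<subseteq> {xlo $ i - xt $ i <..< xhi $ i - xt $ i}"
    if "L = L1 @ i # L2" "BB = Bs (foldl (gs_step XI BI WI) KI L1) i" for L1 i L2 BB
  proof -
    have "Uf i = ihull {w \<in> WI i. \<exists>\<alpha>\<in>XI i i. \<exists>\<beta>\<in>BB. \<alpha> * w = \<beta>}"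
      using Ufi[OF that(1)] unfolding that(2) gamma1_def .
    then show ?thesis using Une[of i] Ub[of _ i] by auto
  qed
  have Xle: "Xlo $ i $ j \<le> Xhi $ i $ j" for i j
    using h3[rule_format, OF xt_in, of i j] by auto
  have sgn: "0 < Xlo $ i $ i \<or> Xhi $ i $ i < 0" for i
  proof -
    obtain L1 L2 where Ld: "L = L1 @ i # L2" using split_list sL by (metis UNIV_I)
    show ?thesis using key1d_sign[OF Xle KW refl] keyS[OF Ld refl] by blast
  qed
  define \<sigma> where "\<sigma> i = (if 0 < Xlo $ i $ i then 1 else (-1::real))" for i
  have \<sigma>pos: "\<sigma> i * \<alpha> > 0" if "\<alpha> \<in> XI i i" for i \<alpha>
    using sgn[of i] that by (auto simp: \<sigma>_def)
  have \<sigma>nz: "\<sigma> i \<noteq> 0" for i by (simp add: \<sigma>_def)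
  define T where "T v = (\<chi> i. max (xlo $ i) (min (xhi $ i) (v $ i - \<sigma> i * g v $ i)))" for v
  have contg: "continuous_on (cbox xlo xhi) g"
  proof (rule continuous_at_imp_continuous_on, rule ballI)
    fix x assume "x \<in> cbox xlo xhi"
    then have "x \<in> D" using D_box by auto
    from has_derivative_continuous[OF deriv[OF this]] show "isCont g x" .
  qed
  have contT: "continuous_on (cbox xlo xhi) T" unfolding T_def
    by (intro continuous_intros contg)
  have Tin: "T \<in> cbox xlo xhi \<rightarrow> cbox xlo xhi"
    unfolding T_def using x_le by (auto simp: mem_box_cart)
  obtain x where x: "x \<in> cbox xlo xhi" "T x = x"
    using brouwer[OF compact_cbox convex_box(1) _ contT Tin] xt_in by auto
  have fp: "x $ i = max (xlo $ i) (min (xhi $ i) (x $ i - \<sigma> i * g x $ i))" for i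
  proof -
    have "x $ i = T x $ i" using x(2) by simp
    then show ?thesis unfolding T_def by simp
  qed
  define u where "u = x - xt"
  have "(\<forall>j. u $ j \<in> foldl (gs_step XI BI WI) KI L j) \<and> (\<forall>j. connected (foldl (gs_step XI BI WI) KI L j))"
  proof (rule foldl_prefix_inv[where P="\<lambda>V. (\<forall>j. u $ j \<in> V j) \<and> (\<forall>j. connected (V j))"])
    show "(\<forall>j. u $ j \<in> KI j) \<and> (\<forall>j. connected (KI j))"
      using x(1) unfolding u_def by (auto simp: mem_box_cart)
  next
    fix L1 i L2
    assume Ld: "L = L1 @ i # L2"
      and IH: "(\<forall>j. u $ j \<in> foldl (gs_step XI BI WI) KI L1 j) \<and> (\<forall>j. connected (foldl (gs_step XI BI WI) KI L1 j))"
    define V where "V = foldl (gs_step XI BI WI) KI L1"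
    define BB where "BB = Bs V i"
    have IH1: "\<forall>j. u $ j \<in> V j" and IH2: "\<forall>j. connected (V j)" using IH unfolding V_def by auto
    have cBB: "connected BB" unfolding BB_def
      by (intro connected_isub connected_uminus_Icc connected_ilsum)
         (auto intro!: connected_imul simp: IH2)
    obtain a where a: "\<forall>j. a j \<in> XI i j"
      "g x $ i = g xt $ i + a i * (x - xt) $ i + (\<Sum>j\<in>UNIV - {i}. a j * (x - xt) $ j)"
      using row_eq[OF x(1)] by blast
    define \<beta> where "\<beta> = - g xt $ i - (\<Sum>j\<in>UNIV - {i}. a j * u $ j)"
    have hb: "\<beta> \<in> BB"
      using row_beta[of u V a i "g xt $ i"] IH1 a h2 unfolding BB_def \<beta>_def by (auto simp: mem_box_cart)
    have gi: "g x $ i = a i * u $ i - \<beta>" using a(2) unfolding u_def \<beta>_def by simp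
    have ai: "a i \<in> XI i i" using a(1) by blast
    have kS: "ihull {w \<in> WI i. \<exists>\<alpha>\<in>XI i i. \<exists>\<beta>\<in>BB. \<alpha> * w = \<beta>} \<noteq> {}"
      "ihull {w \<in> WI i. \<exists>\<alpha>\<in>XI i i. \<exists>\<beta>\<in>BB. \<alpha> * w = \<beta>} \<subseteq> {xlo $ i - xt $ i <..< xhi $ i - xt $ i}"
      using keyS[OF Ld] unfolding BB_def V_def by auto
    have bd: "xlo $ i - xt $ i < \<beta> / a i \<and> \<beta> / a i < xhi $ i - xt $ i"
      using key1d_bound[OF KW sgn cBB refl kS ai hb] .
    have xb: "xlo $ i \<le> x $ i" "x $ i \<le> xhi $ i" using x(1) unfolding mem_box_cart by auto
    have "x $ i - xt $ i = \<beta> / a i"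
      using fp_arith[OF xb fp[of i] gi[unfolded u_def vector_minus_component] \<sigma>pos[OF ai]] bd by simp
    then have uq: "u $ i = \<beta> / a i" unfolding u_def by simp
    have anz: "a i \<noteq> 0" using \<sigma>pos[OF ai] by auto
    have he: "a i * u $ i = \<beta>" using uq anz by simp
    have hw: "u $ i \<in> WI i" using x_in_W[OF x(1)] unfolding u_def .
    have "\<exists>\<alpha>\<in>XI i i. \<exists>\<beta>'\<in>BB. \<alpha> * u $ i = \<beta>'"
      using ai hb he by (intro bexI[where x="a i"] bexI[where x="\<beta>"])
    then have "u $ i \<in> {w \<in> WI i. \<exists>\<alpha>\<in>XI i i. \<exists>\<beta>\<in>BB. \<alpha> * w = \<beta>}"
      using hw apply (intro CollectI conjI) apply assumption+ done
    then have "u $ i \<in> gamma1 (XI i i) BB (WI i)"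
      unfolding gamma1_def by (rule subsetD[OF ihull_sub])
    then have m: "u $ i \<in> gamma1 (XI i i) (Bs V i) (WI i)" unfolding BB_def .
    have c: "connected (gamma1 (XI i i) (Bs V i) (WI i))" by (rule connected_gamma1)
    show "(\<forall>j. u $ j \<in> gs_step XI BI WI (foldl (gs_step XI BI WI) KI L1) i j) \<and>
          (\<forall>j. connected (gs_step XI BI WI (foldl (gs_step XI BI WI) KI L1) i j))"
      using IH m c unfolding gs_step_def V_def by auto
  qed
  then have "u \<in> GS XI BI KI WI" unfolding GSe Uf_def by simp
  then have "x \<in> (\<lambda>v. xt + v) ` GS XI BI KI WI" unfolding u_def
    by (auto intro!: image_eqI[of _ _ "x - xt"])
  then have "x \<in> box xlo xhi" using sub by auto
  then have "g x $ i = 0" for i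
    using fp_interior[OF _ _ fp[of i] \<sigma>nz[of i]] unfolding mem_box_cart by blast
  then show ?thesis using x(1) by (intro bexI[of _ x]) (simp add: vec_eq_iff)
qed

end



lemma regular:
  fixes xlo xhi ylo yhi zlo zhi xt :: "real^'n::{finite,linorder}"
    and Xlo Xhi A :: "real^'n::{finite,linorder}^'n::{finite,linorder}"
  assumes xt_in: "xt \<in> cbox xlo xhi"
    and h1: "cbox xlo xhi \<subseteq> cbox zlo zhi"
    and ne_y: "\<forall>i. ylo $ i \<le> yhi $ i"
    and ne: "(\<lambda>v. xt + v) ` GS (\<lambda>i j. {Xlo $ i $ j .. Xhi $ i $ j})
                   (\<lambda>i. uminus ` {ylo $ i .. yhi $ i})
                   (\<lambda>i. {xlo $ i - xt $ i .. xhi $ i - xt $ i})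
                   (\<lambda>i. {zlo $ i - xt $ i .. zhi $ i - xt $ i}) \<noteq> {}"
    and sub: "(\<lambda>v. xt + v) ` GS (\<lambda>i j. {Xlo $ i $ j .. Xhi $ i $ j})
                   (\<lambda>i. uminus ` {ylo $ i .. yhi $ i})
                   (\<lambda>i. {xlo $ i - xt $ i .. xhi $ i - xt $ i})
                   (\<lambda>i. {zlo $ i - xt $ i .. zhi $ i - xt $ i}) \<subseteq> interior (cbox xlo xhi)"
    and A: "\<forall>i j. A $ i $ j \<in> {Xlo $ i $ j .. Xhi $ i $ j}"
    and Ad: "A *v d = 0"
  shows "d = 0"
proof (rule ccontr)
  assume dnz: "d \<noteq> 0"
  define h where "h v = A *v v + (ylo - A *v xt)" for v
  have der: "(h has_derivative (\<lambda>k. A *v k)) (at v)" if "v \<in> UNIV" for v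
    unfolding h_def
    by (intro has_derivative_add_const bounded_linear_imp_has_derivative)
       simp
  have hxt: "h xt \<in> cbox ylo yhi" unfolding h_def using ne_y by (simp add: mem_box_cart)
  have h3: "\<forall>x \<in> cbox xlo xhi. \<forall>i j. (\<lambda>_. A) x $ i $ j \<in> {Xlo $ i $ j .. Xhi $ i $ j}"
    using A by simp
  obtain v0 where v0: "v0 \<in> cbox xlo xhi" "h v0 = 0"
    using exists_zero[where g=h and Jg="\<lambda>_. A" and D=UNIV, OF subset_UNIV der xt_in h1 hxt h3 ne sub]
    by blast
  have hline: "h (v0 + t *\<^sub>R d) = 0" for t
    using v0(2) Ad unfolding h_def by (simp add: algebra_simps)
  define Z where "Z = (\<lambda>t. v0 + t *\<^sub>R d) -` cbox xlo xhi"
  have Zb: "Z = (\<lambda>t. v0 + t *\<^sub>R d) -` box xlo xhi"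
  proof
    show "Z \<subseteq> (\<lambda>t. v0 + t *\<^sub>R d) -` box xlo xhi"
    proof
      fix t assume "t \<in> Z"
      then have "v0 + t *\<^sub>R d \<in> cbox xlo xhi" unfolding Z_def by simp
      from zero_mem[where g=h and Jg="\<lambda>_. A" and D=UNIV, OF subset_UNIV der xt_in h1 hxt h3 this hline]
      show "t \<in> (\<lambda>t. v0 + t *\<^sub>R d) -` box xlo xhi" using sub by auto
    qed
  next
    show "(\<lambda>t. v0 + t *\<^sub>R d) -` box xlo xhi \<subseteq> Z" unfolding Z_def using box_subset_cbox by auto
  qed
  have cont: "continuous (at t) (\<lambda>t. v0 + t *\<^sub>R d)" for t by (intro continuous_intros)
  have "closed Z" unfolding Z_def by (intro continuous_closed_vimage closed_cbox cont)
  moreover have "open Z" unfolding Zb by (intro continuous_open_vimage open_box cont)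
  moreover have "0 \<in> Z" unfolding Z_def using v0 by simp
  ultimately have ZU: "Z = UNIV" using clopen[of Z] by auto
  obtain k where k: "d $ k \<noteq> 0" using dnz by (metis vec_eq_iff zero_index)
  define t where "t = (xhi $ k - v0 $ k + 1) / d $ k"
  have "t \<in> Z" using ZU by simp
  then have "v0 + t *\<^sub>R d \<in> cbox xlo xhi" unfolding Z_def by simp
  then have "(v0 + t *\<^sub>R d) $ k \<le> xhi $ k" unfolding mem_box_cart by blast
  moreover have "(v0 + t *\<^sub>R d) $ k = xhi $ k + 1" unfolding t_def using k by simp
  ultimately show False by simp
qed

theorem theorem2:
  fixes f :: "real^'p \<Rightarrow> real^'n::{finite,linorder} \<Rightarrow> real^'n::{finite,linorder}"
    and J :: "real^'p \<Rightarrow> real^'n::{finite,linorder} \<Rightarrow> real^'n::{finite,linorder}^'n::{finite,linorder}"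
    and D :: "real^'p \<Rightarrow> (real^'n::{finite,linorder}) set"
    and xlo xhi ylo yhi zlo zhi xt :: "real^'n::{finite,linorder}"
    and alo ahi :: "real^'p"
    and Xlo Xhi :: "real^'n::{finite,linorder}^'n::{finite,linorder}"
  assumes D_open: "\<And>a. open (D a)"
    and D_box: "\<And>a. cbox xlo xhi \<subseteq> D a"
    and deriv: "\<And>a x. x \<in> D a \<Longrightarrow> ((f a) has_derivative (\<lambda>h. J a x *v h)) (at x)"
    and ne_x: "\<forall>i. xlo $ i \<le> xhi $ i"
    and ne_y: "\<forall>i. ylo $ i \<le> yhi $ i"
    and ne_z: "\<forall>i. zlo $ i \<le> zhi $ i"
    and ne_a: "\<forall>k. alo $ k \<le> ahi $ k"
    and ne_X: "\<forall>i j. Xlo $ i $ j \<le> Xhi $ i $ j"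
    and xt_in: "xt \<in> cbox xlo xhi"
    and h1: "cbox xlo xhi \<subseteq> cbox zlo zhi"
    and h2: "\<forall>a \<in> cbox alo ahi. f a xt \<in> cbox ylo yhi"
    and h3: "\<forall>a \<in> cbox alo ahi. \<forall>x \<in> cbox xlo xhi. \<forall>i j.
               J a x $ i $ j \<in> {Xlo $ i $ j .. Xhi $ i $ j}"
  shows "(let x' = (\<lambda>v. xt + v) `
                GS (\<lambda>i j. {Xlo $ i $ j .. Xhi $ i $ j})
                   (\<lambda>i. uminus ` {ylo $ i .. yhi $ i})
                   (\<lambda>i. {xlo $ i - xt $ i .. xhi $ i - xt $ i})
                   (\<lambda>i. {zlo $ i - xt $ i .. zhi $ i - xt $ i})
         in (\<forall>a \<in> cbox alo ahi. \<forall>x \<in> cbox xlo xhi. f a x = 0 \<longrightarrow> x \<in> x')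
          \<and> (x' \<noteq> {} \<and> x' \<subseteq> interior (cbox xlo xhi) \<longrightarrow>
               (\<forall>a \<in> cbox alo ahi. \<exists>!x. x \<in> x' \<and> f a x = 0)))"
proof -
  define x' where "x' = (\<lambda>v. xt + v) `
                GS (\<lambda>i j. {Xlo $ i $ j .. Xhi $ i $ j})
                   (\<lambda>i. uminus ` {ylo $ i .. yhi $ i})
                   (\<lambda>i. {xlo $ i - xt $ i .. xhi $ i - xt $ i})
                   (\<lambda>i. {zlo $ i - xt $ i .. zhi $ i - xt $ i})"
  have h2a: "f a xt \<in> cbox ylo yhi" if "a \<in> cbox alo ahi" for a using h2 that by blast
  have h3a: "\<forall>x \<in> cbox xlo xhi. \<forall>i j. J a x $ i $ j \<in> {Xlo $ i $ j .. Xhi $ i $ j}"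
    if "a \<in> cbox alo ahi" for a using h3 that by blast
  have P1: "x \<in> x'" if a: "a \<in> cbox alo ahi" and x: "x \<in> cbox xlo xhi" and fx: "f a x = 0" for a x
    unfolding x'_def
    using zero_mem[where g="f a" and Jg="J a" and D="D a", OF D_box deriv xt_in h1 h2a[OF a] h3a[OF a] x fx] .
  have P2: "\<exists>!x. x \<in> x' \<and> f a x = 0"
    if ne: "x' \<noteq> {}" and sub: "x' \<subseteq> interior (cbox xlo xhi)" and a: "a \<in> cbox alo ahi" for a
  proof -
    obtain x0 where x0: "x0 \<in> cbox xlo xhi" "f a x0 = 0"
      using exists_zero[where g="f a" and Jg="J a" and D="D a", OF D_box deriv xt_in h1 h2a[OF a] h3a[OF a]]
        ne sub unfolding x'_def by blast
    have x0': "x0 \<in> x'" using P1[OF a x0] .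
    show ?thesis
    proof (rule ex1I[of _ x0])
      show "x0 \<in> x' \<and> f a x0 = 0" using x0' x0 by simp
    next
      fix y assume y: "y \<in> x' \<and> f a y = 0"
      have yb: "y \<in> cbox xlo xhi" using y sub interior_subset by blast
      have "\<forall>i. \<exists>\<xi>\<in>cbox xlo xhi. f a y $ i - f a x0 $ i = (\<Sum>j\<in>UNIV. J a \<xi> $ i $ j * (y - x0) $ j)"
        using mvt_row[OF deriv D_box[of a] x0(1) yb] by blast
      then obtain \<xi> where \<xi>: "\<forall>i. \<xi> i \<in> cbox xlo xhi \<and>
          f a y $ i - f a x0 $ i = (\<Sum>j\<in>UNIV. J a (\<xi> i) $ i $ j * (y - x0) $ j)"
        by metis
      define A where "A = (\<chi> i j. J a (\<xi> i) $ i $ j)"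
      have A: "\<forall>i j. A $ i $ j \<in> {Xlo $ i $ j .. Xhi $ i $ j}"
        unfolding A_def using h3a[OF a] \<xi> by auto
      have "(A *v (y - x0)) $ i = 0" for i
        using \<xi> y x0(2) unfolding A_def matrix_vector_mult_def by simp
      then have Ad: "A *v (y - x0) = 0" by (simp add: vec_eq_iff)
      have "y - x0 = 0"
        using regular[OF xt_in h1 ne_y ne[unfolded x'_def] sub[unfolded x'_def] A Ad] .
      then show "y = x0" by simp
    qed
  qed
  show ?thesis unfolding Let_def x'_def[symmetric] using P1 P2 by blast
qed

end
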